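(* Let $(X,\to)$ be a transition system over $A$. For every equivalence relation $R$ on $X$ and $x_1,x_2\in X$: $(x_1,x_2)\in\beta_b(R)$ iff for all $a\in A$, every $y_1\in\delta_a(x_1)$ has some $y_2\in\delta_a(x_2)$ with $y_1\mathrel Ry_2$, and every $y_2\in\delta_a(x_2)$ has some $y_1\in\delta_a(x_1)$ with $y_1\mathrel Ry_2$.
   Context: $\delta_a(x)=\{x'\mid x\xrightarrow{a}x'\}$; $\Diamond_a(S)=\{x\mid\exists x'\in S\colon x\xrightarrow{a}x'\}$. $\alpha_b(\mathcal S)=\{(x,x')\mid\forall S\in\mathcal S\colon(x\in S\iff x'\in S)\}$, $\gamma_b(R)=\{S\subseteq X\mid\forall(x,x')\in R\colon(x\in S\iff x'\in S)\}$; $\mathit{lo}_b(\mathcal S)=\bigcup_{a\in A}\{\Diamond_a(S)\mid S\in\mathrm{cl}^{\cup,\lnot}_f(\mathcal S)\}$ with $\mathrm{cl}^{\cup,\lnot}_f$ the closure under finite unions and complement; $\beta_b=\alpha_b\circ\mathit{lo}_b\circ\gamma_b$ (on equivalences on $X$). *)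

theory Defs
  imports Main
begin

text \<open>A transition system over labels of type 'a with states of type 'x
  (X = UNIV, A = UNIV) is given by its transition relation
  T :: ('x \<times> 'a \<times> 'x) set, where (x,a,x') \<in> T means x --a--> x'.\<close>

definition delta :: "('x \<times> 'a \<times> 'x) set \<Rightarrow> 'a \<Rightarrow> 'x \<Rightarrow> 'x set" where
  "delta T a x = {x'. (x, a, x') \<in> T}"

definition dia :: "('x \<times> 'a \<times> 'x) set \<Rightarrow> 'a \<Rightarrow> 'x set \<Rightarrow> 'x set" where
  "dia T a S = {x. \<exists>x'\<in>S. (x, a, x') \<in> T}"

definition alpha_b :: "'x set set \<Rightarrow> ('x \<times> 'x) set" where
  "alpha_b SS = {(x, x'). \<forall>S\<in>SS. (x \<in> S \<longleftrightarrow> x' \<in> S)}"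

definition gamma_b :: "('x \<times> 'x) set \<Rightarrow> 'x set set" where
  "gamma_b R = {S. \<forall>(x, x')\<in>R. (x \<in> S \<longleftrightarrow> x' \<in> S)}"

inductive_set cl_union_neg :: "'x set set \<Rightarrow> 'x set set" for SS where
  base: "S \<in> SS \<Longrightarrow> S \<in> cl_union_neg SS"
| empty: "{} \<in> cl_union_neg SS"
| union: "S1 \<in> cl_union_neg SS \<Longrightarrow> S2 \<in> cl_union_neg SS \<Longrightarrow> S1 \<union> S2 \<in> cl_union_neg SS"
| compl: "S \<in> cl_union_neg SS \<Longrightarrow> - S \<in> cl_union_neg SS"

definition lo_b :: "('x \<times> 'a \<times> 'x) set \<Rightarrow> 'x set set \<Rightarrow> 'x set set" where
  "lo_b T SS = (\<Union>a. {dia T a S | S. S \<in> cl_union_neg SS})"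

definition beta_b :: "('x \<times> 'a \<times> 'x) set \<Rightarrow> ('x \<times> 'x) set \<Rightarrow> ('x \<times> 'x) set" where
  "beta_b T R = alpha_b (lo_b T (gamma_b R))"

end

theory Submission
  imports Defs
begin

lemma cl_gamma:
  assumes "S \<in> cl_union_neg (gamma_b R)"
  shows "S \<in> gamma_b R"
  using assms
  by (induction rule: cl_union_neg.induct) (auto simp: gamma_b_def)

lemma class_in_gamma:
  assumes "equiv UNIV R"
  shows "R `` {y} \<in> gamma_b R"
proof -
  have "sym R" "trans R" using assms by (auto simp: equiv_def)
  then show ?thesis unfolding gamma_b_def
    by (auto dest: symD transD)
qed

theorem mainTheorem10:
  fixes T :: "('x \<times> 'a \<times> 'x) set" and R :: "('x \<times> 'x) set" and x1 x2 :: 'x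
  assumes "equiv UNIV R"
  shows "(x1, x2) \<in> beta_b T R \<longleftrightarrow>
    (\<forall>a. (\<forall>y1\<in>delta T a x1. \<exists>y2\<in>delta T a x2. (y1, y2) \<in> R) \<and>
         (\<forall>y2\<in>delta T a x2. \<exists>y1\<in>delta T a x1. (y1, y2) \<in> R))"
proof
  have symR: "sym R" using assms by (auto simp: equiv_def)
  assume H: "(x1, x2) \<in> beta_b T R"
  have key: "x1 \<in> dia T a S \<longleftrightarrow> x2 \<in> dia T a S" if "S \<in> gamma_b R" for a S
  proof -
    have "dia T a S \<in> lo_b T (gamma_b R)"
      unfolding lo_b_def using that cl_union_neg.base by blast
    then show ?thesis using H unfolding beta_b_def alpha_b_def by auto
  qed
  show "\<forall>a. (\<forall>y1\<in>delta T a x1. \<exists>y2\<in>delta T a x2. (y1, y2) \<in> R) \<and>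
         (\<forall>y2\<in>delta T a x2. \<exists>y1\<in>delta T a x1. (y1, y2) \<in> R)"
  proof (intro allI conjI ballI)
    fix a y1 assume y1: "y1 \<in> delta T a x1"
    have "x1 \<in> dia T a (R `` {y1})"
      using y1 assms unfolding dia_def delta_def equiv_def refl_on_def by auto
    then have "x2 \<in> dia T a (R `` {y1})" using key class_in_gamma[OF assms] by blast
    then show "\<exists>y2\<in>delta T a x2. (y1, y2) \<in> R" unfolding dia_def delta_def by auto
  next
    fix a y2 assume y2: "y2 \<in> delta T a x2"
    have "x2 \<in> dia T a (R `` {y2})"
      using y2 assms unfolding dia_def delta_def equiv_def refl_on_def by auto
    then have "x1 \<in> dia T a (R `` {y2})" using key class_in_gamma[OF assms] by blast
    then show "\<exists>y1\<in>delta T a x1. (y1, y2) \<in> R" unfolding dia_def delta_def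
      using symR by (auto dest: symD)
  qed
next
  assume H: "\<forall>a. (\<forall>y1\<in>delta T a x1. \<exists>y2\<in>delta T a x2. (y1, y2) \<in> R) \<and>
         (\<forall>y2\<in>delta T a x2. \<exists>y1\<in>delta T a x1. (y1, y2) \<in> R)"
  show "(x1, x2) \<in> beta_b T R"
    unfolding beta_b_def alpha_b_def
  proof (clarsimp)
    fix U assume "U \<in> lo_b T (gamma_b R)"
    then obtain a S where U: "U = dia T a S" and S: "S \<in> gamma_b R"
      unfolding lo_b_def using cl_gamma by blast
    have SR: "\<And>u v. (u, v) \<in> R \<Longrightarrow> u \<in> S \<longleftrightarrow> v \<in> S" using S unfolding gamma_b_def by auto
    show "x1 \<in> U \<longleftrightarrow> x2 \<in> U"
    proof
      assume "x1 \<in> U"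
      then obtain y1 where "y1 \<in> S" "y1 \<in> delta T a x1" unfolding U dia_def delta_def by auto
      with H SR obtain y2 where "y2 \<in> delta T a x2" "y2 \<in> S" by blast
      then show "x2 \<in> U" unfolding U dia_def delta_def by auto
    next
      assume "x2 \<in> U"
      then obtain y2 where "y2 \<in> S" "y2 \<in> delta T a x2" unfolding U dia_def delta_def by auto
      with H SR obtain y1 where "y1 \<in> delta T a x1" "y1 \<in> S" by blast
      then show "x1 \<in> U" unfolding U dia_def delta_def by auto
    qed
  qed
qed

end
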